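(* Let $0<\alpha<1$, $\lambda>0$, $P$ a probability distribution of $\xi$, and for every $\xi$ let $x\mapsto\ell(x;\xi)$ be $G$-Lipschitz and $L$-smooth. Let $\psi^*(t)=\frac1\alpha\log(1-\alpha+\alpha e^t)$ and define $\widehat{\mathcal L}(x,\eta,\xi)=\lambda\psi^*\big(\frac{\ell(x;\xi)-G\eta}{\lambda}\big)+G\eta$, $\widehat{\mathcal L}(x,\eta)=\mathbb E_{\xi\sim P}\widehat{\mathcal L}(x,\eta,\xi)$. Then for all $(x,\eta)$, $\mathbb E\|\nabla\widehat{\mathcal L}(x,\eta,\xi)\|^2\le2\alpha^{-2}G^2$, and $\widehat{\mathcal L}$ is $K$-smooth in $(x,\eta)$ with $K=\frac L\alpha+\frac{G^2}{2\lambda\alpha}$.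
   Context: $\psi^*$ here is the conjugate of the smoothed CVaR divergence $\psi^{\mathrm{smo}}_\alpha(t)=t\log t+\frac{1-\alpha t}{\alpha}\log\frac{1-\alpha t}{1-\alpha}$ on $[0,1/\alpha)$, $+\infty$ otherwise. Gradients are with respect to $(x,\eta)$. *)

theory Defs
  imports "HOL-Analysis.Analysis" "HOL-Probability.Probability"
begin

definition has_gradient :: "('a::real_inner \<Rightarrow> real) \<Rightarrow> 'a \<Rightarrow> 'a \<Rightarrow> bool" where
  "has_gradient f g z \<longleftrightarrow> (f has_derivative (\<lambda>h. g \<bullet> h)) (at z)"

definition gradient :: "('a::real_inner \<Rightarrow> real) \<Rightarrow> 'a \<Rightarrow> 'a" where
  "gradient f z = (THE g. has_gradient f g z)"

definition smooth_with :: "real \<Rightarrow> ('a::real_inner \<Rightarrow> real) \<Rightarrow> bool" where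
  "smooth_with L f \<longleftrightarrow> (\<forall>z. \<exists>g. has_gradient f g z) \<and> L-lipschitz_on UNIV (gradient f)"

text \<open>Conjugate of the smoothed CVaR divergence.\<close>
definition psi_star :: "real \<Rightarrow> real \<Rightarrow> real" where
  "psi_star \<alpha> t = ln (1 - \<alpha> + \<alpha> * exp t) / \<alpha>"

definition Lhat_pt :: "real \<Rightarrow> real \<Rightarrow> real \<Rightarrow> ('a \<Rightarrow> 'b \<Rightarrow> real) \<Rightarrow> 'a \<times> real \<Rightarrow> 'b \<Rightarrow> real" where
  "Lhat_pt \<alpha> lam G ell z \<xi> = lam * psi_star \<alpha> ((ell (fst z) \<xi> - G * snd z) / lam) + G * snd z"

definition Lhat :: "'b measure \<Rightarrow> real \<Rightarrow> real \<Rightarrow> real \<Rightarrow> ('a \<Rightarrow> 'b \<Rightarrow> real) \<Rightarrow> 'a \<times> real \<Rightarrow> real" where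
  "Lhat P \<alpha> lam G ell z = (\<integral>\<xi>. Lhat_pt \<alpha> lam G ell z \<xi> \<partial>P)"

end

theory Submission
  imports Defs
begin


lemma gradient_eq:
  assumes "has_gradient f g z" shows "gradient f z = g"
proof -
  have "g' = g" if "has_gradient f g' z" for g'
  proof -
    have "(\<lambda>h. g' \<bullet> h) = (\<lambda>h. g \<bullet> h)"
      using has_derivative_unique that assms unfolding has_gradient_def by blast
    then have "g' \<bullet> (g' - g) = g \<bullet> (g' - g)" by meson
    then have "(g' - g) \<bullet> (g' - g) = 0" by (simp add: inner_diff_left)
    then show ?thesis by simp
  qed
  then show ?thesis unfolding gradient_def using assms by blast
qed

lemma descent:
  fixes f :: "'v::real_inner \<Rightarrow> real"
  assumes gr: "\<And>z. has_gradient f (gf z) z" and lip: "K-lipschitz_on UNIV gf"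
  shows "\<bar>f (z + h) - f z - gf z \<bullet> h\<bar> \<le> K * (norm h)\<^sup>2"
proof -
  define \<phi> where "\<phi> t = f (z + t *\<^sub>R h) - t * (gf z \<bullet> h)" for t
  have d: "DERIV \<phi> t :> (gf (z + t *\<^sub>R h) - gf z) \<bullet> h" for t
  proof -
    have 1: "((\<lambda>t. z + t *\<^sub>R h) has_derivative (\<lambda>t. t *\<^sub>R h)) (at t)"
      by (auto intro!: derivative_eq_intros)
    have 2: "(f has_derivative (\<lambda>v. gf (z + t *\<^sub>R h) \<bullet> v)) (at (z + t *\<^sub>R h))"
      using gr unfolding has_gradient_def by blast
    have "((\<lambda>t. f (z + t *\<^sub>R h)) has_derivative (\<lambda>s. gf (z + t *\<^sub>R h) \<bullet> (s *\<^sub>R h))) (at t)"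
      using has_derivative_compose[OF 1 2] by simp
    then have "((\<lambda>t. f (z + t *\<^sub>R h)) has_real_derivative gf (z + t *\<^sub>R h) \<bullet> h) (at t)"
      by (rule has_derivative_imp_has_field_derivative) simp
    then show ?thesis unfolding \<phi>_def
      by (auto intro!: derivative_eq_intros simp: inner_diff_left)
  qed
  obtain c where c: "0 < c" "c < 1" "\<phi> 1 - \<phi> 0 = (1 - 0) * ((gf (z + c *\<^sub>R h) - gf z) \<bullet> h)"
    using MVT2[of 0 1 \<phi>, OF _ d] by auto
  have "\<bar>(gf (z + c *\<^sub>R h) - gf z) \<bullet> h\<bar> \<le> norm (gf (z + c *\<^sub>R h) - gf z) * norm h"
    by (rule Cauchy_Schwarz_ineq2)
  also have "norm (gf (z + c *\<^sub>R h) - gf z) \<le> K * norm (c *\<^sub>R h)"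
    using lip unfolding lipschitz_on_def dist_norm by (metis UNIV_I add_diff_cancel_left')
  also have "K * norm (c *\<^sub>R h) \<le> K * norm h"
    using c lip by (auto simp: lipschitz_on_def intro!: mult_left_mono mult_left_le_one_le)
  finally have "\<bar>(gf (z + c *\<^sub>R h) - gf z) \<bullet> h\<bar> \<le> K * norm h * norm h"
    by (simp add: mult_right_mono)
  then show ?thesis using c unfolding \<phi>_def by (simp add: power2_eq_square)
qed


lemma grad_bound:
  fixes f :: "'v::real_inner \<Rightarrow> real"
  assumes gr: "\<And>z. has_gradient f (gf z) z" and lip: "K-lipschitz_on UNIV gf"
    and flip: "G-lipschitz_on UNIV f"
  shows "norm (gf x) \<le> G"
proof (rule ccontr)
  define D where "D = gf x"
  define n where "n = norm D"
  assume "\<not> ?thesis" then have nD: "G < n" unfolding n_def D_def by simp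
  have G0: "0 \<le> G" and K0: "0 \<le> K" using flip lip by (auto simp: lipschitz_on_def)
  define t where "t = (n - G) / (2 * (K + 1) * n)"
  have n0: "0 < n" using nD G0 by simp
  have t0: "0 < t" using nD K0 n0 unfolding t_def by simp
  have 1: "\<bar>f (x + t *\<^sub>R D) - f x - D \<bullet> (t *\<^sub>R D)\<bar> \<le> K * (norm (t *\<^sub>R D))\<^sup>2"
    using descent[OF gr lip, of x "t *\<^sub>R D"] unfolding D_def by simp
  have 2: "\<bar>f (x + t *\<^sub>R D) - f x\<bar> \<le> G * norm (t *\<^sub>R D)"
    using flip unfolding lipschitz_on_def dist_norm by (metis UNIV_I add_diff_cancel_left' real_norm_def)
  have e1: "D \<bullet> (t *\<^sub>R D) = t * n\<^sup>2" unfolding n_def by (simp add: power2_norm_eq_inner)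
  have e2: "norm (t *\<^sub>R D) = t * n" unfolding n_def using t0 by simp
  have 3: "t * n * n \<le> t * n * (G + K * t * n)"
    using 1 2 unfolding e1 e2 by (simp add: power2_eq_square algebra_simps)
  have 4: "n \<le> G + K * t * n"
    using mult_left_le_imp_le[OF 3] t0 n0 by simp
  have "t * n = (n - G) / (2 * (K + 1))" unfolding t_def using n0 by simp
  then have 5: "K * t * n = K * (n - G) / (2 * (K + 1))" by (simp add: mult.assoc)
  have "K * (n - G) < (2 * (K + 1)) * (n - G)" using nD K0 by (intro mult_strict_right_mono) auto
  then have "K * (n - G) / (2 * (K + 1)) < n - G" using K0 by (simp add: pos_divide_less_eq mult.commute)
  then show False using 4 5 by linarith
qed

definition sfun :: "real \<Rightarrow> real \<Rightarrow> real" where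
  "sfun \<alpha> t = exp t / (1 - \<alpha> + \<alpha> * exp t)"

context fixes \<alpha> :: real assumes a0: "0 < \<alpha>" and a1: "\<alpha> < 1"
begin

lemma den_pos: "0 < 1 - \<alpha> + \<alpha> * exp t"
  using a0 a1 by (smt (verit) exp_gt_zero mult_pos_pos)

lemma psi_star_deriv: "DERIV (psi_star \<alpha>) t :> sfun \<alpha> t"
proof -
  have "DERIV (\<lambda>t. ln (1 - \<alpha> + \<alpha> * exp t) / \<alpha>) t :> (\<alpha> * exp t / (1 - \<alpha> + \<alpha> * exp t)) / \<alpha>"
    using den_pos[of t] by (auto intro!: derivative_eq_intros)
  then show ?thesis using a0 unfolding psi_star_def[abs_def] sfun_def by simp
qed

lemma sfun_pos: "0 < sfun \<alpha> t"
  using den_pos[of t] unfolding sfun_def by simp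

lemma sfun_lt: "\<alpha> * sfun \<alpha> t < 1"
  using den_pos[of t] a1 unfolding sfun_def by (simp add: field_simps)

lemma sfun_deriv: "DERIV (sfun \<alpha>) t :> (1 - \<alpha>) * exp t / (1 - \<alpha> + \<alpha> * exp t)\<^sup>2"
  unfolding sfun_def[abs_def] using den_pos[of t]
  apply (auto intro!: derivative_eq_intros)
  apply (simp add: power2_eq_square divide_simps)
  apply (simp add: algebra_simps)
  done

lemma sfun_deriv_bound: "\<bar>(1 - \<alpha>) * exp t / (1 - \<alpha> + \<alpha> * exp t)\<^sup>2\<bar> \<le> 1 / (4 * \<alpha>)"
proof -
  define y where "y = exp t"
  have y: "0 < y" unfolding y_def by simp
  define D where "D = 1 - \<alpha> + \<alpha> * y"
  have D: "0 < D" using den_pos[of t] unfolding y_def D_def by simp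
  have key: "4 * \<alpha> * ((1 - \<alpha>) * y) \<le> D\<^sup>2"
  proof -
    have "0 \<le> (1 - \<alpha> - \<alpha> * y)\<^sup>2" by simp
    moreover have "D\<^sup>2 - 4 * \<alpha> * ((1 - \<alpha>) * y) = (1 - \<alpha> - \<alpha> * y)\<^sup>2"
      unfolding D_def power2_eq_square by algebra
    ultimately show ?thesis by linarith
  qed
  have nn: "0 \<le> (1 - \<alpha>) * y" using a1 y by simp
  have "(1 - \<alpha>) * y / D\<^sup>2 \<le> 1 / (4 * \<alpha>)"
  proof -
    have "(1 - \<alpha>) * y = (4 * \<alpha> * ((1 - \<alpha>) * y)) / (4 * \<alpha>)" using a0 by simp
    also have "\<dots> \<le> D\<^sup>2 / (4 * \<alpha>)" using key a0 by (intro divide_right_mono) simp_all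
    finally have "(1 - \<alpha>) * y \<le> D\<^sup>2 / (4 * \<alpha>)" .
    then have "(1 - \<alpha>) * y / D\<^sup>2 \<le> (D\<^sup>2 / (4 * \<alpha>)) / D\<^sup>2"
      using D by (intro divide_right_mono) simp_all
    also have "\<dots> = 1 / (4 * \<alpha>)" using D by simp
    finally show ?thesis .
  qed
  moreover have "0 \<le> (1 - \<alpha>) * y / D\<^sup>2" using nn by simp
  ultimately have "\<bar>(1 - \<alpha>) * y / D\<^sup>2\<bar> \<le> 1 / (4 * \<alpha>)" by linarith
  then show ?thesis unfolding y_def D_def .
qed

lemma sfun_lip: "\<bar>sfun \<alpha> a - sfun \<alpha> b\<bar> \<le> \<bar>a - b\<bar> / (4 * \<alpha>)"
proof -
  have main: "\<bar>sfun \<alpha> a - sfun \<alpha> b\<bar> \<le> \<bar>a - b\<bar> / (4 * \<alpha>)" if ab: "a < b" for a b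
  proof -
    obtain c where c: "sfun \<alpha> b - sfun \<alpha> a = (b - a) * ((1 - \<alpha>) * exp c / (1 - \<alpha> + \<alpha> * exp c)\<^sup>2)"
      using MVT2[of a b "sfun \<alpha>" "\<lambda>t. (1 - \<alpha>) * exp t / (1 - \<alpha> + \<alpha> * exp t)\<^sup>2", OF ab sfun_deriv] by blast
    define Q where "Q = (1 - \<alpha>) * exp c / (1 - \<alpha> + \<alpha> * exp c)\<^sup>2"
    have Q: "\<bar>Q\<bar> \<le> 1 / (4 * \<alpha>)" unfolding Q_def by (rule sfun_deriv_bound)
    have "sfun \<alpha> b - sfun \<alpha> a = (b - a) * Q" using c unfolding Q_def .
    then have "\<bar>sfun \<alpha> a - sfun \<alpha> b\<bar> = \<bar>b - a\<bar> * \<bar>Q\<bar>" by (metis abs_minus_commute abs_mult)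
    also have "\<dots> \<le> \<bar>b - a\<bar> * (1 / (4 * \<alpha>))"
      by (rule mult_left_mono[OF Q]) simp
    finally show ?thesis by (simp add: abs_minus_commute)
  qed
  show ?thesis
    using main[of a b] main[of b a] by (cases a b rule: linorder_cases) (auto simp: abs_minus_commute)
qed

lemma ln_bound: "\<bar>ln (1 - \<alpha> + \<alpha> * exp t)\<bar> \<le> \<bar>t\<bar> - ln (1 - \<alpha>)"
proof -
  define X where "X = 1 - \<alpha> + \<alpha> * exp t"
  have X: "0 < X" unfolding X_def by (rule den_pos)
  have l0: "ln (1 - \<alpha>) \<le> 0" using a0 a1 by simp
  show ?thesis
  proof (cases "t \<ge> 0")
    case True
    have e1: "1 \<le> exp t" using True by simp
    have "X - 1 = \<alpha> * (exp t - 1)" unfolding X_def by (simp add: algebra_simps)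
    then have "1 \<le> X" using e1 a0 by (smt (verit) mult_nonneg_nonneg)
    have "exp t - X = (1 - \<alpha>) * (exp t - 1)" unfolding X_def by (simp add: algebra_simps)
    then have "X \<le> exp t" using e1 a1 by (smt (verit) mult_nonneg_nonneg)
    have "0 \<le> ln X" using \<open>1 \<le> X\<close> by simp
    moreover have "ln X \<le> ln (exp t)" using \<open>X \<le> exp t\<close> X by (subst ln_le_cancel_iff) auto
    ultimately show ?thesis using True l0 unfolding X_def[symmetric] by simp
  next
    case False
    have e1: "exp t \<le> 1" using False by simp
    have "1 - X = \<alpha> * (1 - exp t)" unfolding X_def by (simp add: algebra_simps)
    then have "X \<le> 1" using e1 a0 by (smt (verit) mult_nonneg_nonneg)
    have "X - (1 - \<alpha>) = \<alpha> * exp t" unfolding X_def by simp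
    then have "1 - \<alpha> \<le> X" using a0 by (smt (verit) mult_pos_pos exp_gt_zero)
    have "ln X \<le> 0" using \<open>X \<le> 1\<close> X by simp
    moreover have "ln (1 - \<alpha>) \<le> ln X" using \<open>1 - \<alpha> \<le> X\<close> a1 by (subst ln_le_cancel_iff) auto
    ultimately show ?thesis unfolding X_def[symmetric] by simp
  qed
qed

end



context
  fixes \<alpha> lam G L :: real and l :: "'a::real_inner \<Rightarrow> real"
  assumes a0: "0 < \<alpha>" and a1: "\<alpha> < 1" and lam0: "0 < lam"
    and llip: "G-lipschitz_on UNIV l" and lsm: "smooth_with L l"
begin

definition "uu z = (l (fst z) - G * snd z) / lam"
definition "gp z = (sfun \<alpha> (uu z) *\<^sub>R gradient l (fst z), G * (1 - sfun \<alpha> (uu z)))"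
definition "fz z = lam * psi_star \<alpha> ((l (fst z) - G * snd z) / lam) + G * snd z"

lemma hl: "has_gradient l (gradient l x) x"
  using lsm gradient_eq unfolding smooth_with_def by metis

lemma G0: "0 \<le> G" using llip by (simp add: lipschitz_on_def)
lemma L0: "0 \<le> L" using lsm by (simp add: lipschitz_on_def smooth_with_def)

lemma dl_bound: "norm (gradient l x) \<le> G"
  using grad_bound[of l "gradient l" L G x] hl lsm llip unfolding smooth_with_def by blast

lemma fz_grad: "has_gradient fz (gp z) z"
proof -
  have dl: "((\<lambda>z. l (fst z)) has_derivative (\<lambda>h. gradient l (fst z) \<bullet> fst h)) (at z)"
    using has_derivative_compose[OF has_derivative_fst[OF has_derivative_ident[of "at z"]] hl[of "fst z", unfolded has_gradient_def]]
    by simp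
  have hu: "(uu has_derivative (\<lambda>h. (gradient l (fst z) \<bullet> fst h - G * snd h) / lam)) (at z)"
    unfolding uu_def[abs_def] using lam0
    by (auto intro!: derivative_eq_intros dl)
  have hp: "((\<lambda>z. psi_star \<alpha> (uu z)) has_derivative (\<lambda>h. sfun \<alpha> (uu z) * ((gradient l (fst z) \<bullet> fst h - G * snd h) / lam))) (at z)"
    using has_derivative_compose[OF hu has_field_derivative_imp_has_derivative[OF psi_star_deriv[OF a0 a1]]] .
  have "(fz has_derivative (\<lambda>h. lam * (sfun \<alpha> (uu z) * ((gradient l (fst z) \<bullet> fst h - G * snd h) / lam)) + G * snd h)) (at z)"
    unfolding fz_def[abs_def] uu_def[symmetric] using lam0
    by (auto intro!: derivative_eq_intros hp)
  moreover have "(\<lambda>h. lam * (sfun \<alpha> (uu z) * ((gradient l (fst z) \<bullet> fst h - G * snd h) / lam)) + G * snd h) = (\<lambda>h. gp z \<bullet> h)"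
    using lam0 by (auto simp: fun_eq_iff gp_def inner_prod_def field_simps)
  ultimately show ?thesis unfolding has_gradient_def by simp
qed

lemma gp_bound: "(norm (gp z))\<^sup>2 \<le> 2 * G\<^sup>2 / \<alpha>\<^sup>2"
proof -
  define s where "s = sfun \<alpha> (uu z)"
  define d where "d = gradient l (fst z)"
  have s0: "0 < s" unfolding s_def by (rule sfun_pos[OF a0 a1])
  have s1: "s \<le> 1 / \<alpha>" using sfun_lt[OF a0 a1, of "uu z"] a0 unfolding s_def by (simp add: field_simps)
  have ia: "1 \<le> 1 / \<alpha>" using a0 a1 by simp
  have "norm (s *\<^sub>R d) = s * norm d" using s0 by simp
  also have "\<dots> \<le> (1 / \<alpha>) * G" using s0 s1 dl_bound[of "fst z"] G0 a0 unfolding d_def by (intro mult_mono) auto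
  finally have A: "(norm (s *\<^sub>R d))\<^sup>2 \<le> ((1 / \<alpha>) * G)\<^sup>2" by (intro power_mono) auto
  have "\<bar>1 - s\<bar> \<le> 1 / \<alpha>" using s0 s1 ia by linarith
  have "\<bar>G * (1 - s)\<bar> = G * \<bar>1 - s\<bar>" using G0 by (simp add: abs_mult)
  also have "\<dots> \<le> G * (1 / \<alpha>)" using \<open>\<bar>1 - s\<bar> \<le> 1 / \<alpha>\<close> G0 by (rule mult_left_mono)
  finally have "\<bar>G * (1 - s)\<bar> \<le> (1 / \<alpha>) * G" by simp
  then have B: "(norm (G * (1 - s)))\<^sup>2 \<le> ((1 / \<alpha>) * G)\<^sup>2"
    by (metis abs_ge_zero power_mono real_norm_def)
  have "(norm (gp z))\<^sup>2 = (norm (s *\<^sub>R d))\<^sup>2 + (norm (G * (1 - s)))\<^sup>2"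
    unfolding gp_def s_def[symmetric] d_def[symmetric] norm_Pair by simp
  also have "\<dots> \<le> 2 * ((1 / \<alpha>) * G)\<^sup>2" using A B by simp
  also have "\<dots> = 2 * G\<^sup>2 / \<alpha>\<^sup>2" by (simp add: power_divide power_mult_distrib)
  finally show ?thesis .
qed

lemma gp_lip: "(L / \<alpha> + G\<^sup>2 / (2 * lam * \<alpha>))-lipschitz_on UNIV gp"
proof (rule lipschitz_onI)
  show "0 \<le> L / \<alpha> + G\<^sup>2 / (2 * lam * \<alpha>)" using L0 a0 lam0 by simp
  fix z1 z2 :: "'a \<times> real"
  assume _: "z1 \<in> UNIV" "z2 \<in> UNIV"
  define s1 where "s1 = sfun \<alpha> (uu z1)"
  define s2 where "s2 = sfun \<alpha> (uu z2)"
  define d1 where "d1 = gradient l (fst z1)"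
  define d2 where "d2 = gradient l (fst z2)"
  define N where "N = norm (z1 - z2)"
  define a where "a = norm (fst z1 - fst z2)"
  define b where "b = \<bar>snd z1 - snd z2\<bar>"
  have N: "N = sqrt (a\<^sup>2 + b\<^sup>2)" unfolding N_def a_def b_def norm_prod_def by simp
  have aN: "a \<le> N" unfolding N by (rule real_le_rsqrt) simp
  have a0': "0 \<le> a" "0 \<le> b" unfolding a_def b_def by auto
  have s10: "0 < s1" unfolding s1_def by (rule sfun_pos[OF a0 a1])
  have s11: "s1 \<le> 1 / \<alpha>" using sfun_lt[OF a0 a1, of "uu z1"] a0 unfolding s1_def by (simp add: field_simps)
  have dd: "norm (d1 - d2) \<le> L * a"
    using lsm unfolding smooth_with_def lipschitz_on_def dist_norm d1_def d2_def a_def by blast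
  have d2b: "norm d2 \<le> G" unfolding d2_def by (rule dl_bound)
  have eq: "gp z1 - gp z2 = (s1 *\<^sub>R (d1 - d2), 0) + ((s1 - s2) *\<^sub>R d2, G * (s2 - s1))"
    unfolding gp_def s1_def[symmetric] s2_def[symmetric] d1_def[symmetric] d2_def[symmetric]
    by (simp add: algebra_simps)
  have P1: "norm (s1 *\<^sub>R (d1 - d2), 0::real) \<le> L / \<alpha> * N"
  proof -
    have "norm (s1 *\<^sub>R (d1 - d2), 0::real) = s1 * norm (d1 - d2)"
      using s10 by (simp add: norm_Pair)
    also have "\<dots> \<le> (1 / \<alpha>) * (L * N)"
      using s10 s11 dd aN L0 a0 a0' by (intro mult_mono order_trans[OF dd] mult_left_mono) auto
    finally show ?thesis by simp
  qed
  have sqab: "a + b \<le> sqrt 2 * N"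
  proof -
    have "(a + b)\<^sup>2 \<le> 2 * (a\<^sup>2 + b\<^sup>2)"
      using sum_squares_ge_zero[of "a - b" 0]
      by (simp add: power2_eq_square algebra_simps)
    then have "a + b \<le> sqrt (2 * (a\<^sup>2 + b\<^sup>2))" by (rule real_le_rsqrt)
    then show ?thesis unfolding N real_sqrt_mult .
  qed
  have uab: "\<bar>uu z1 - uu z2\<bar> \<le> G * (a + b) / lam"
  proof -
    have ld: "\<bar>l (fst z1) - l (fst z2)\<bar> \<le> G * a"
      using llip unfolding lipschitz_on_def dist_norm a_def by (metis UNIV_I real_norm_def)
    have "uu z1 - uu z2 = ((l (fst z1) - l (fst z2)) - G * (snd z1 - snd z2)) / lam"
      unfolding uu_def using lam0 by (simp add: field_simps)
    then have "\<bar>uu z1 - uu z2\<bar> = \<bar>(l (fst z1) - l (fst z2)) - G * (snd z1 - snd z2)\<bar> / lam"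
      using lam0 by simp
    also have "\<dots> \<le> (G * a + G * b) / lam"
      using ld G0 lam0 unfolding b_def
      by (intro divide_right_mono) (auto simp: abs_mult intro!: order_trans[OF abs_triangle_ineq4] add_mono)
    finally show ?thesis by (simp add: algebra_simps)
  qed
  have P2: "norm ((s1 - s2) *\<^sub>R d2, G * (s2 - s1)) \<le> G\<^sup>2 / (2 * lam * \<alpha>) * N"
  proof -
    have "norm ((s1 - s2) *\<^sub>R d2, G * (s2 - s1)) = sqrt ((\<bar>s1 - s2\<bar> * norm d2)\<^sup>2 + (G * \<bar>s1 - s2\<bar>)\<^sup>2)"
      unfolding norm_Pair using G0 by (simp add: abs_mult abs_minus_commute)
    also have "\<dots> \<le> sqrt ((\<bar>s1 - s2\<bar> * G)\<^sup>2 + (G * \<bar>s1 - s2\<bar>)\<^sup>2)"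
      using d2b by (intro real_sqrt_le_mono add_right_mono power_mono mult_left_mono) auto
    also have "\<dots> = sqrt (2 * (G * \<bar>s1 - s2\<bar>)\<^sup>2)"
      by (rule arg_cong[where f=sqrt]) algebra
    also have "\<dots> = sqrt 2 * (G * \<bar>s1 - s2\<bar>)"
      using G0 by (simp add: real_sqrt_mult abs_mult)
    also have "\<dots> \<le> sqrt 2 * (G * (\<bar>uu z1 - uu z2\<bar> / (4 * \<alpha>)))"
      using G0 unfolding s1_def s2_def by (intro mult_left_mono sfun_lip[OF a0 a1]) auto
    also have "\<dots> \<le> sqrt 2 * (G * ((G * (a + b) / lam) / (4 * \<alpha>)))"
      using G0 a0 uab by (intro mult_left_mono divide_right_mono) auto
    also have "\<dots> \<le> sqrt 2 * (G * ((G * (sqrt 2 * N) / lam) / (4 * \<alpha>)))"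
      using G0 a0 lam0 sqab by (intro mult_left_mono divide_right_mono) auto
    also have "\<dots> = (sqrt 2 * sqrt 2) * G\<^sup>2 / (4 * lam * \<alpha>) * N"
      by (simp add: power2_eq_square field_simps)
    also have "\<dots> = G\<^sup>2 / (2 * lam * \<alpha>) * N" by simp
    finally show ?thesis .
  qed
  have "dist (gp z1) (gp z2) \<le> norm (s1 *\<^sub>R (d1 - d2), 0::real) + norm ((s1 - s2) *\<^sub>R d2, G * (s2 - s1))"
    unfolding dist_norm eq by (rule norm_triangle_ineq)
  also have "\<dots> \<le> (L / \<alpha> + G\<^sup>2 / (2 * lam * \<alpha>)) * dist z1 z2"
    using P1 P2 unfolding N_def dist_norm by (simp add: algebra_simps)
  finally show "dist (gp z1) (gp z2) \<le> (L / \<alpha> + G\<^sup>2 / (2 * lam * \<alpha>)) * dist z1 z2" .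
qed

end



lemma int_le_const:
  fixes f :: "'a \<Rightarrow> real"
  assumes "prob_space M" "integrable M f" "\<And>x. x \<in> space M \<Longrightarrow> f x \<le> c"
  shows "integral\<^sup>L M f \<le> c"
proof -
  interpret prob_space M by fact
  have "integral\<^sup>L M f \<le> integral\<^sup>L M (\<lambda>x. c)" by (rule Bochner_Integration.integral_mono) (auto simp: assms)
  also have "\<dots> = c" by (simp add: prob_space)
  finally show ?thesis .
qed

lemma int_abs_le_const:
  fixes f :: "'a \<Rightarrow> real"
  assumes "prob_space M" "integrable M f" "\<And>x. x \<in> space M \<Longrightarrow> \<bar>f x\<bar> \<le> c"
  shows "\<bar>integral\<^sup>L M f\<bar> \<le> c"
proof -
  have "\<bar>integral\<^sup>L M f\<bar> \<le> (\<integral>x. \<bar>f x\<bar> \<partial>M)" by simp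
  also have "\<dots> \<le> c" using assms by (intro int_le_const) auto
  finally show ?thesis .
qed

theorem lemma3p11:
  fixes P :: "'b measure" and ell :: "'a::euclidean_space \<Rightarrow> 'b \<Rightarrow> real"
    and \<alpha> lam G L :: real
  assumes "0 < \<alpha>" "\<alpha> < 1" "0 < lam"
    and "prob_space P"
    and "\<And>x. ell x \<in> borel_measurable P"
    and "\<And>x. integrable P (ell x)"
    and "\<And>\<xi>. \<xi> \<in> space P \<Longrightarrow> G-lipschitz_on UNIV (\<lambda>x. ell x \<xi>)"
    and "\<And>\<xi>. \<xi> \<in> space P \<Longrightarrow> smooth_with L (\<lambda>x. ell x \<xi>)"
  shows "(\<forall>z :: 'a \<times> real.
           (\<integral>\<^sup>+ \<xi>. ennreal ((norm (gradient (\<lambda>w. Lhat_pt \<alpha> lam G ell w \<xi>) z))\<^sup>2) \<partial>P)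
             \<le> ennreal (2 * G\<^sup>2 / \<alpha>\<^sup>2))
         \<and> smooth_with (L / \<alpha> + G\<^sup>2 / (2 * lam * \<alpha>)) (Lhat P \<alpha> lam G ell)"
proof -
  interpret P: prob_space P by (rule assms(4))
  note a0 = assms(1) and a1 = assms(2) and lam0 = assms(3)
  define K where "K = L / \<alpha> + G\<^sup>2 / (2 * lam * \<alpha>)"
  define l where "l \<xi> = (\<lambda>x. ell x \<xi>)" for \<xi>
  define g where "g \<xi> = gp \<alpha> lam G (l \<xi>)" for \<xi>
  define f where "f \<xi> = (\<lambda>w. Lhat_pt \<alpha> lam G ell w \<xi>)" for \<xi>
  have lip: "G-lipschitz_on UNIV (l \<xi>)" if "\<xi> \<in> space P" for \<xi>
    using assms(7)[OF that] unfolding l_def .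
  have sm: "smooth_with L (l \<xi>)" if "\<xi> \<in> space P" for \<xi>
    using assms(8)[OF that] unfolding l_def .
  have fz_eq: "f \<xi> = fz \<alpha> lam G (l \<xi>)" if "\<xi> \<in> space P" for \<xi>
    using fz_def[OF a0 a1 lam0 lip[OF that] sm[OF that]] unfolding Lhat_pt_def l_def f_def
    by (simp add: fun_eq_iff)
  have grad: "has_gradient (f \<xi>) (g \<xi> z) z" if "\<xi> \<in> space P" for \<xi> z
    using fz_grad[OF a0 a1 lam0 lip[OF that] sm[OF that]] fz_eq[OF that] unfolding g_def by simp
  have gbound: "(norm (g \<xi> z))\<^sup>2 \<le> 2 * G\<^sup>2 / \<alpha>\<^sup>2" if "\<xi> \<in> space P" for \<xi> z
    using gp_bound[OF a0 a1 lam0 lip[OF that] sm[OF that]] unfolding g_def by simp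
  have glip: "K-lipschitz_on UNIV (g \<xi>)" if "\<xi> \<in> space P" for \<xi>
    using gp_lip[OF a0 a1 lam0 lip[OF that] sm[OF that]] unfolding g_def K_def by simp
  obtain \<xi>0 where \<xi>0: "\<xi>0 \<in> space P" using P.not_empty by blast
  have hG: "0 \<le> G" using G0[OF a0 a1 lam0 lip[OF \<xi>0] sm[OF \<xi>0]] .
  have hL: "0 \<le> L" using L0[OF a0 a1 lam0 lip[OF \<xi>0] sm[OF \<xi>0]] .
  have K0: "0 \<le> K" unfolding K_def using hL a0 lam0 by simp
  have desc: "\<bar>f \<xi> (z + h) - f \<xi> z - g \<xi> z \<bullet> h\<bar> \<le> K * (norm h)\<^sup>2" if "\<xi> \<in> space P" for \<xi> z h
    using descent[OF grad[OF that] glip[OF that]] .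

  have part1: "\<forall>z :: 'a \<times> real.
           (\<integral>\<^sup>+ \<xi>. ennreal ((norm (gradient (\<lambda>w. Lhat_pt \<alpha> lam G ell w \<xi>) z))\<^sup>2) \<partial>P)
             \<le> ennreal (2 * G\<^sup>2 / \<alpha>\<^sup>2)"
  proof
    fix z :: "'a \<times> real"
    have "(\<integral>\<^sup>+ \<xi>. ennreal ((norm (gradient (\<lambda>w. Lhat_pt \<alpha> lam G ell w \<xi>) z))\<^sup>2) \<partial>P)
        \<le> (\<integral>\<^sup>+ \<xi>. ennreal (2 * G\<^sup>2 / \<alpha>\<^sup>2) \<partial>P)"
    proof (rule nn_integral_mono)
      fix \<xi> assume x: "\<xi> \<in> space P"
      have "gradient (\<lambda>w. Lhat_pt \<alpha> lam G ell w \<xi>) z = g \<xi> z"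
        using gradient_eq[OF grad[OF x]] unfolding f_def .
      then show "ennreal ((norm (gradient (\<lambda>w. Lhat_pt \<alpha> lam G ell w \<xi>) z))\<^sup>2) \<le> ennreal (2 * G\<^sup>2 / \<alpha>\<^sup>2)"
        using gbound[OF x] by (simp add: ennreal_leI)
    qed
    also have "\<dots> = ennreal (2 * G\<^sup>2 / \<alpha>\<^sup>2)" by (simp add: P.emeasure_space_1)
    finally show "(\<integral>\<^sup>+ \<xi>. ennreal ((norm (gradient (\<lambda>w. Lhat_pt \<alpha> lam G ell w \<xi>) z))\<^sup>2) \<partial>P)
             \<le> ennreal (2 * G\<^sup>2 / \<alpha>\<^sup>2)" .
  qed

  have ellm[measurable]: "ell x \<in> borel_measurable P" for x by (rule assms(5))
  have fmeas: "(\<lambda>\<xi>. f \<xi> z) \<in> borel_measurable P" for z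
    unfolding f_def Lhat_pt_def psi_star_def by measurable
  have fint: "integrable P (\<lambda>\<xi>. f \<xi> z)" for z
  proof -
    define c where "c = (G * \<bar>snd z\<bar>) / \<alpha> + lam * (- ln (1 - \<alpha>)) / \<alpha> + G * \<bar>snd z\<bar>"
    have "integrable P (\<lambda>\<xi>. \<bar>ell (fst z) \<xi>\<bar> / \<alpha> + c)"
    proof (rule Bochner_Integration.integrable_add)
      have "integrable P (\<lambda>\<xi>. \<bar>ell (fst z) \<xi>\<bar>)" using assms(6)[of "fst z"] by (rule integrable_abs)
      then show "integrable P (\<lambda>\<xi>. \<bar>ell (fst z) \<xi>\<bar> / \<alpha>)" by (rule integrable_divide_zero)
      show "integrable P (\<lambda>\<xi>. c)" by (rule P.integrable_const)
    qed
    then show ?thesis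
    proof (rule Bochner_Integration.integrable_bound)
      show "(\<lambda>\<xi>. f \<xi> z) \<in> borel_measurable P" by (rule fmeas)
      show "AE \<xi> in P. norm (f \<xi> z) \<le> norm (\<bar>ell (fst z) \<xi>\<bar> / \<alpha> + c)"
      proof (rule AE_I2)
        fix \<xi>
        define u where "u = (ell (fst z) \<xi> - G * snd z) / lam"
        define X where "X = 1 - \<alpha> + \<alpha> * exp u"
        have lb: "\<bar>ln X\<bar> \<le> \<bar>u\<bar> - ln (1 - \<alpha>)" unfolding X_def by (rule ln_bound[OF a0 a1])
        have fe: "f \<xi> z = lam * (ln X / \<alpha>) + G * snd z"
          unfolding f_def Lhat_pt_def psi_star_def u_def X_def ..
        have "\<bar>f \<xi> z\<bar> \<le> lam * (\<bar>ln X\<bar> / \<alpha>) + G * \<bar>snd z\<bar>"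
          unfolding fe using lam0 a0 hG by (auto simp: abs_mult intro!: order_trans[OF abs_triangle_ineq])
        also have "\<dots> \<le> lam * ((\<bar>u\<bar> - ln (1 - \<alpha>)) / \<alpha>) + G * \<bar>snd z\<bar>"
          using lb lam0 a0 by (intro add_right_mono mult_left_mono divide_right_mono) auto
        also have "\<dots> = (lam * \<bar>u\<bar>) / \<alpha> + lam * (- ln (1 - \<alpha>)) / \<alpha> + G * \<bar>snd z\<bar>"
          by (simp add: diff_divide_distrib right_diff_distrib)
        also have "lam * \<bar>u\<bar> \<le> \<bar>ell (fst z) \<xi>\<bar> + G * \<bar>snd z\<bar>"
        proof -
          have "lam * \<bar>u\<bar> = \<bar>ell (fst z) \<xi> - G * snd z\<bar>" unfolding u_def using lam0 by (simp add: abs_div)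
          also have "\<dots> \<le> \<bar>ell (fst z) \<xi>\<bar> + G * \<bar>snd z\<bar>" using hG by (simp add: abs_mult order_trans[OF abs_triangle_ineq4])
          finally show ?thesis .
        qed
        then have "(lam * \<bar>u\<bar>) / \<alpha> + lam * (- ln (1 - \<alpha>)) / \<alpha> + G * \<bar>snd z\<bar> \<le> (\<bar>ell (fst z) \<xi>\<bar> + G * \<bar>snd z\<bar>) / \<alpha> + lam * (- ln (1 - \<alpha>)) / \<alpha> + G * \<bar>snd z\<bar>"
          using a0 by (intro add_right_mono divide_right_mono) auto
        also have "\<dots> = \<bar>ell (fst z) \<xi>\<bar> / \<alpha> + c" unfolding c_def by (simp add: add_divide_distrib)
        finally have "\<bar>f \<xi> z\<bar> \<le> \<bar>ell (fst z) \<xi>\<bar> / \<alpha> + c" .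
        then show "norm (f \<xi> z) \<le> norm (\<bar>ell (fst z) \<xi>\<bar> / \<alpha> + c)" by simp
      qed
    qed
  qed

  have gmeas: "(\<lambda>\<xi>. g \<xi> z \<bullet> h) \<in> borel_measurable P" for z h
  proof (rule borel_measurable_LIMSEQ_real)
    show "(\<lambda>\<xi>. (f \<xi> (z + (1 / real (Suc n)) *\<^sub>R h) - f \<xi> z) * real (Suc n)) \<in> borel_measurable P" for n
      using fmeas by measurable
    fix \<xi> assume x: "\<xi> \<in> space P"
    have b: "norm ((f \<xi> (z + (1 / real (Suc n)) *\<^sub>R h) - f \<xi> z) * real (Suc n) - g \<xi> z \<bullet> h)
          \<le> K * (norm h)\<^sup>2 * inverse (real (Suc n))" for n
    proof -
      define t where "t = 1 / real (Suc n)"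
      have t0: "0 < t" unfolding t_def by simp
      have "\<bar>f \<xi> (z + t *\<^sub>R h) - f \<xi> z - g \<xi> z \<bullet> (t *\<^sub>R h)\<bar> \<le> K * (norm (t *\<^sub>R h))\<^sup>2"
        by (rule desc[OF x])
      then have "\<bar>f \<xi> (z + t *\<^sub>R h) - f \<xi> z - t * (g \<xi> z \<bullet> h)\<bar> \<le> K * (norm h)\<^sup>2 * t * t"
        using t0 by (simp add: power2_eq_square algebra_simps)
      moreover have "(f \<xi> (z + t *\<^sub>R h) - f \<xi> z) * real (Suc n) - g \<xi> z \<bullet> h
          = (f \<xi> (z + t *\<^sub>R h) - f \<xi> z - t * (g \<xi> z \<bullet> h)) * real (Suc n)"
        unfolding t_def by (simp add: field_simps)
      ultimately have "\<bar>(f \<xi> (z + t *\<^sub>R h) - f \<xi> z) * real (Suc n) - g \<xi> z \<bullet> h\<bar> \<le> K * (norm h)\<^sup>2 * t * t * real (Suc n)"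
        by (simp add: abs_mult mult_right_mono)
      also have "\<dots> = K * (norm h)\<^sup>2 * inverse (real (Suc n))"
      proof -
        have e1: "t * real (Suc n) = 1" unfolding t_def by simp
        have e2: "t = inverse (real (Suc n))" unfolding t_def by (simp add: inverse_eq_divide)
        have "K * (norm h)\<^sup>2 * t * t * real (Suc n) = K * (norm h)\<^sup>2 * t * (t * real (Suc n))"
          by (simp only: mult.assoc)
        also have "\<dots> = K * (norm h)\<^sup>2 * inverse (real (Suc n))" unfolding e1 by (simp add: e2)
        finally show ?thesis .
      qed
      finally show ?thesis unfolding t_def real_norm_def .
    qed
    have "((\<lambda>n. (f \<xi> (z + (1 / real (Suc n)) *\<^sub>R h) - f \<xi> z) * real (Suc n) - g \<xi> z \<bullet> h) \<longlongrightarrow> 0) sequentially"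
      by (rule Lim_null_comparison[OF always_eventually[OF allI[OF b]]])
         (intro tendsto_mult_right_zero LIMSEQ_inverse_real_of_nat)
    then show "(\<lambda>n. (f \<xi> (z + (1 / real (Suc n)) *\<^sub>R h) - f \<xi> z) * real (Suc n)) \<longlonglongrightarrow> g \<xi> z \<bullet> h"
      by (simp add: LIM_zero_iff)
  qed
  have gint: "integrable P (\<lambda>\<xi>. g \<xi> z \<bullet> h)" for z h
  proof (rule P.integrable_const_bound[where B="sqrt (2 * G\<^sup>2 / \<alpha>\<^sup>2) * norm h"])
    show "AE \<xi> in P. norm (g \<xi> z \<bullet> h) \<le> sqrt (2 * G\<^sup>2 / \<alpha>\<^sup>2) * norm h"
    proof (rule AE_I2)
      fix \<xi> assume x: "\<xi> \<in> space P"
      have "norm (g \<xi> z) \<le> sqrt (2 * G\<^sup>2 / \<alpha>\<^sup>2)" by (rule real_le_rsqrt[OF gbound[OF x]])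
      then show "norm (g \<xi> z \<bullet> h) \<le> sqrt (2 * G\<^sup>2 / \<alpha>\<^sup>2) * norm h"
        using Cauchy_Schwarz_ineq2[of "g \<xi> z" h] by (simp add: mult_right_mono order_trans)
    qed
  qed (rule gmeas)

  define Gv where "Gv z = (\<Sum>b\<in>Basis. (\<integral>\<xi>. g \<xi> z \<bullet> b \<partial>P) *\<^sub>R b)" for z
  have Gv_inner: "Gv z \<bullet> h = (\<integral>\<xi>. g \<xi> z \<bullet> h \<partial>P)" for z h
  proof -
    have "Gv z \<bullet> h = (\<Sum>b\<in>Basis. (\<integral>\<xi>. g \<xi> z \<bullet> b \<partial>P) * (b \<bullet> h))"
      unfolding Gv_def by (simp add: inner_sum_left)
    also have "\<dots> = (\<Sum>b\<in>Basis. (\<integral>\<xi>. g \<xi> z \<bullet> b \<partial>P) * (h \<bullet> b))"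
      by (simp add: inner_commute[of _ h])
    also have "\<dots> = (\<Sum>b\<in>Basis. (\<integral>\<xi>. (g \<xi> z \<bullet> b) * (h \<bullet> b) \<partial>P))"
      using gint by simp
    also have "\<dots> = (\<integral>\<xi>. (\<Sum>b\<in>Basis. (g \<xi> z \<bullet> b) * (h \<bullet> b)) \<partial>P)"
      by (rule Bochner_Integration.integral_sum[symmetric]) (auto intro: integrable_mult_left gint)
    also have "\<dots> = (\<integral>\<xi>. g \<xi> z \<bullet> h \<partial>P)"
      by (simp add: euclidean_inner[symmetric])
    finally show ?thesis .
  qed

  define F where "F = Lhat P \<alpha> lam G ell"
  have F_eq: "F z = (\<integral>\<xi>. f \<xi> z \<partial>P)" for z unfolding F_def Lhat_def f_def ..
  have Fdesc: "\<bar>F (z + h) - F z - Gv z \<bullet> h\<bar> \<le> K * (norm h)\<^sup>2" for z h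
  proof -
    have "F (z + h) - F z - Gv z \<bullet> h = (\<integral>\<xi>. (f \<xi> (z + h) - f \<xi> z - g \<xi> z \<bullet> h) \<partial>P)"
      unfolding F_eq Gv_inner using fint gint by simp
    also have "\<bar>\<dots>\<bar> \<le> K * (norm h)\<^sup>2"
      using desc fint gint by (intro int_abs_le_const[OF assms(4)]) auto
    finally show ?thesis .
  qed
  have Fgrad: "has_gradient F (Gv z) z" for z
    unfolding has_gradient_def has_derivative_at
  proof
    show "bounded_linear ((\<bullet>) (Gv z))" by (rule bounded_linear_inner_right)
    have ev: "\<forall>\<^sub>F h in at 0. norm (norm (F (z + h) - F z - Gv z \<bullet> h) / norm h) \<le> K * norm h"
    proof (rule always_eventually, rule allI)
      fix h :: "'a \<times> real"
      show "norm (norm (F (z + h) - F z - Gv z \<bullet> h) / norm h) \<le> K * norm h"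
      proof (cases "h = 0")
        case True then show ?thesis by simp
      next
        case False
        then have n0: "0 < norm h" by simp
        have "norm (F (z + h) - F z - Gv z \<bullet> h) / norm h \<le> K * (norm h)\<^sup>2 / norm h"
          using Fdesc[of z h] n0 by (intro divide_right_mono) auto
        also have "\<dots> = K * norm h" using n0 by (simp add: power2_eq_square)
        finally show ?thesis by simp
      qed
    qed
    have "((\<lambda>h. K * norm h) \<longlongrightarrow> 0) (at (0 :: 'a \<times> real))"
      by (intro tendsto_mult_right_zero tendsto_norm_zero tendsto_ident_at)
    then show "((\<lambda>h. norm (F (z + h) - F z - Gv z \<bullet> h) / norm h) \<longlongrightarrow> 0) (at 0)"
      by (rule Lim_null_comparison[OF ev])
  qed
  have Fgr_eq: "gradient F z = Gv z" for z by (rule gradient_eq[OF Fgrad])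
  have Flip: "K-lipschitz_on UNIV (gradient F)"
  proof (rule lipschitz_onI)
    show "0 \<le> K" by (rule K0)
    fix z1 z2 :: "'a \<times> real"
    assume _: "z1 \<in> UNIV" "z2 \<in> UNIV"
    define d where "d = Gv z1 - Gv z2"
    have "(norm d)\<^sup>2 = Gv z1 \<bullet> d - Gv z2 \<bullet> d"
      by (simp add: power2_norm_eq_inner inner_diff_left d_def)
    also have "\<dots> = (\<integral>\<xi>. (g \<xi> z1 \<bullet> d - g \<xi> z2 \<bullet> d) \<partial>P)"
      unfolding Gv_inner using gint by simp
    also have "\<dots> \<le> K * norm (z1 - z2) * norm d"
    proof (rule int_le_const[OF assms(4)])
      show "integrable P (\<lambda>\<xi>. g \<xi> z1 \<bullet> d - g \<xi> z2 \<bullet> d)" using gint by simp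
      fix \<xi> assume x: "\<xi> \<in> space P"
      have "g \<xi> z1 \<bullet> d - g \<xi> z2 \<bullet> d = (g \<xi> z1 - g \<xi> z2) \<bullet> d" by (simp add: inner_diff_left)
      also have "\<dots> \<le> norm (g \<xi> z1 - g \<xi> z2) * norm d" by (rule norm_cauchy_schwarz)
      also have "\<dots> \<le> K * norm (z1 - z2) * norm d"
      proof -
        have "norm (g \<xi> z1 - g \<xi> z2) \<le> K * norm (z1 - z2)"
          using glip[OF x] unfolding lipschitz_on_def dist_norm by blast
        then show ?thesis by (rule mult_right_mono) simp
      qed
      finally show "g \<xi> z1 \<bullet> d - g \<xi> z2 \<bullet> d \<le> K * norm (z1 - z2) * norm d" .
    qed
    finally have sq: "norm d * norm d \<le> (K * norm (z1 - z2)) * norm d" by (simp add: power2_eq_square)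
    have "norm d \<le> K * norm (z1 - z2)"
    proof (cases "norm d = 0")
      case True then show ?thesis using K0 by simp
    next
      case False then have "0 < norm d" by simp
      then show ?thesis using sq by (simp add: mult_le_cancel_right)
    qed
    then show "dist (gradient F z1) (gradient F z2) \<le> K * dist z1 z2"
      unfolding Fgr_eq dist_norm d_def .
  qed
  have "smooth_with K F"
    unfolding smooth_with_def using Fgrad Flip by blast
  then show ?thesis using part1 unfolding K_def F_def by blast
qed


end
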